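(* Let $\mathbf{s}$ be a binary sequence that is not ultimately periodic, and let $p_{\mathbf{s}}(N)$ denote the number of distinct factors of length $N$ of $\mathbf{s}$. Then for all integers $k\ge1$ and $N\ge1$, $C_{2k}(\mathbf{s},\,2k\,p_{\mathbf{s}}(N))\ge N$.
   Context: Correlation measure: for $\mathbf{s}$ over $\{0,1\}$, an integer $r\ge1$, $D=(d_1,\dots,d_r)\in\mathbb{N}^r$ with $0\le d_1<\cdots<d_r$ and $M\in\mathbb{N}$, put $V(\mathbf{s},M,D)=\sum_{n=0}^{M-1}(-1)^{\mathbf{s}(n+d_1)+\cdots+\mathbf{s}(n+d_r)}$, and $C_r(\mathbf{s},N)=\max_{M,D}|V(\mathbf{s},M,D)|$ over all such $D$ and integers $M$ with $M+d_r\le N$. A factor of length $N$ of $\mathbf{s}$ is a word $\mathbf{s}(i)\mathbf{s}(i+1)\cdots\mathbf{s}(i+N-1)$ for some $i\ge0$. *)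

theory Defs
  imports Main
begin

definition binary_seq :: "(nat \<Rightarrow> nat) \<Rightarrow> bool" where
  "binary_seq s \<longleftrightarrow> (\<forall>n. s n \<in> {0, 1})"

definition ultimately_periodic :: "(nat \<Rightarrow> nat) \<Rightarrow> bool" where
  "ultimately_periodic s \<longleftrightarrow> (\<exists>p>0. \<exists>n0. \<forall>n\<ge>n0. s (n + p) = s n)"

definition factor :: "(nat \<Rightarrow> nat) \<Rightarrow> nat \<Rightarrow> nat \<Rightarrow> nat list" where
  "factor s i N = map (\<lambda>j. s (i + j)) [0..<N]"

definition complexity :: "(nat \<Rightarrow> nat) \<Rightarrow> nat \<Rightarrow> nat" where
  "complexity s N = card {factor s i N | i. True}"

definition corrV :: "(nat \<Rightarrow> nat) \<Rightarrow> nat \<Rightarrow> nat list \<Rightarrow> int" where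
  "corrV s M D = (\<Sum>n<M. (-1::int) ^ (\<Sum>d\<leftarrow>D. s (n + d)))"

definition corrC :: "nat \<Rightarrow> (nat \<Rightarrow> nat) \<Rightarrow> nat \<Rightarrow> int" where
  "corrC r s N = Max {\<bar>corrV s M D\<bar> | M D.
      length D = r \<and> sorted_wrt (<) D \<and> M + last D \<le> N}"

end

theory Submission imports Defs begin

lemma factor_eq_iff: "factor s i n = factor s j n \<longleftrightarrow> (\<forall>x<n. s (i+x) = s (j+x))"
  unfolding factor_def by (auto simp: list_eq_iff_nth_eq)

lemma compl_range: "complexity s n = card (range (\<lambda>i. factor s i n))"
  unfolding complexity_def by (simp add: full_SetCompr_eq)

lemma fin_factors:
  assumes "binary_seq s" shows "finite (range (\<lambda>i. factor s i n))"
proof (rule finite_subset)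
  show "range (\<lambda>i. factor s i n) \<subseteq> {xs. set xs \<subseteq> {0,1} \<and> length xs = n}"
    using assms unfolding binary_seq_def factor_def by (auto simp: subset_iff)
  show "finite {xs. set xs \<subseteq> {0::nat,1} \<and> length xs = n}"
    by (rule finite_lists_length_eq) simp
qed

lemma pigeon:
  assumes "binary_seq s"
  shows "\<exists>i j. a \<le> i \<and> i < j \<and> j \<le> a + complexity s n \<and> factor s i n = factor s j n"
proof (rule ccontr)
  assume H: "\<not> ?thesis"
  have "inj_on (\<lambda>i. factor s i n) {a..a + complexity s n}"
  proof (rule inj_onI)
    fix x y assume "x \<in> {a..a + complexity s n}" "y \<in> {a..a + complexity s n}"
      "factor s x n = factor s y n"
    then show "x = y" using H by (metis atLeastAtMost_iff linorder_neqE_nat)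
  qed
  then have "card {a..a + complexity s n} \<le> card (range (\<lambda>i. factor s i n))"
    using fin_factors[OF assms] by (intro card_inj_on_le) auto
  then show False by (simp add: compl_range)
qed

lemma take_factor: "take n (factor s i (Suc n)) = factor s i n"
  unfolding factor_def by (simp add: take_map)

lemma step:
  assumes b: "binary_seq s" and np: "\<not> ultimately_periodic s"
  shows "complexity s n < complexity s (Suc n)"
proof (rule ccontr)
  let ?A = "range (\<lambda>i. factor s i (Suc n))"
  let ?B = "range (\<lambda>i. factor s i n)"
  assume "\<not> ?thesis"
  hence le: "card ?A \<le> card ?B" by (simp add: compl_range)
  have img: "take n ` ?A = ?B" by (auto simp: take_factor image_iff)
  have "card ?B \<le> card ?A" using card_image_le[OF fin_factors[OF b], of "take n" "Suc n"] img by simp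
  hence "card (take n ` ?A) = card ?A" using le img by simp
  hence inj: "inj_on (take n) ?A" using eq_card_imp_inj_on[OF fin_factors[OF b]] by blast
  have E: "s (i+n) = s (j+n)" if "factor s i n = factor s j n" for i j
  proof -
    have "take n (factor s i (Suc n)) = take n (factor s j (Suc n))"
      using that by (simp add: take_factor)
    hence "factor s i (Suc n) = factor s j (Suc n)" using inj by (auto dest: inj_onD)
    thus ?thesis by (simp add: factor_eq_iff)
  qed
  obtain i j where ij: "i < j" "factor s i n = factor s j n"
    using pigeon[OF b, of 0 n] by auto
  have sh: "factor s (i+t) n = factor s (j+t) n" for t
  proof (induction t)
    case 0 then show ?case using ij by simp
  next
    case (Suc t)
    have e: "s (i+t+n) = s (j+t+n)" using E[OF Suc] .
    have "\<forall>x<Suc n. s (i+t+x) = s (j+t+x)"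
      using Suc e unfolding factor_eq_iff by (metis less_antisym)
    hence "\<forall>x<n. s (i+Suc t+x) = s (j+Suc t+x)"
      by (metis Suc_less_eq add_Suc add_Suc_right)
    thus ?case by (simp add: factor_eq_iff)
  qed
  have "ultimately_periodic s"
    unfolding ultimately_periodic_def
  proof (rule exI[of _ "j-i"], intro conjI, simp add: ij, rule exI[of _ "i+n"], intro allI impI)
    fix m assume "i + n \<le> m"
    then obtain t where m: "m = i + t + n" by (metis add.commute add.left_commute le_add_diff_inverse)
    have "s (i+t+n) = s (j+t+n)" using E[OF sh] .
    moreover have "m + (j - i) = j + t + n" using m ij by simp
    ultimately have "s (m + (j - i)) = s m" using m by metis
    then show "s (m + (j - i)) = s m" .
  qed
  with np show False by simp
qed

lemma compl_ge:
  assumes "binary_seq s" "\<not> ultimately_periodic s"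
  shows "complexity s n \<ge> n + 1"
proof (induction n)
  case 0
  have "range (\<lambda>i. factor s i 0) = {[]}" by (auto simp: factor_def)
  then show ?case by (simp add: compl_range)
next
  case (Suc n) then show ?case using step[OF assms, of n] by simp
qed


lemma le_last: "sorted_wrt (<) (D::nat list) \<Longrightarrow> x \<in> set D \<Longrightarrow> x \<le> last D"
  by (induction D) (auto simp: last_in_set, fastforce dest: last_in_set)

lemma fin_corr:
  assumes "r > 0"
  shows "finite {\<bar>corrV s M D\<bar> | M D. length D = r \<and> sorted_wrt (<) D \<and> M + last D \<le> Nb}"
proof -
  have "{\<bar>corrV s M D\<bar> | M D. length D = r \<and> sorted_wrt (<) D \<and> M + last D \<le> Nb}
    \<subseteq> (\<lambda>(M,D). \<bar>corrV s M D\<bar>) ` ({..Nb} \<times> {D. set D \<subseteq> {..Nb} \<and> length D = r})"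
  proof
    fix y assume "y \<in> {\<bar>corrV s M D\<bar> | M D. length D = r \<and> sorted_wrt (<) D \<and> M + last D \<le> Nb}"
    then obtain M D where y: "y = \<bar>corrV s M D\<bar>" "length D = r" "sorted_wrt (<) D" "M + last D \<le> Nb"
      by blast
    have "set D \<subseteq> {..Nb}" using le_last[OF y(3)] y(4) by fastforce
    then show "y \<in> (\<lambda>(M,D). \<bar>corrV s M D\<bar>) ` ({..Nb} \<times> {D. set D \<subseteq> {..Nb} \<and> length D = r})"
      using y by force
  qed
  moreover have "finite ({..Nb} \<times> {D. set D \<subseteq> {..Nb} \<and> length D = r})"
    by (intro finite_cartesian_product finite_lists_length_eq) auto
  ultimately show ?thesis by (meson finite_imageI finite_subset)
qed

lemma even_pairs:
  fixes g :: "nat \<Rightarrow> nat"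
  assumes "\<And>m. g (2*m) = g (2*m+1)"
  shows "even (\<Sum>q<2*k. (g q :: nat))"
proof (induction k)
  case 0 then show ?case by simp
next
  case (Suc k)
  have "(\<Sum>q<2*Suc k. g q) = (\<Sum>q<2*k. g q) + (g (2*k) + g (2*k+1))"
    by (simp add: add.assoc)
  then show ?case using Suc assms[of k] by simp
qed

theorem mainTheorem6:
  fixes s :: "nat \<Rightarrow> nat" and k N :: nat
  assumes "binary_seq s"
    and "\<not> ultimately_periodic s"
    and "k \<ge> 1" and "N \<ge> 1"
  shows "corrC (2 * k) s (2 * k * complexity s N) \<ge> int N"
proof -
  define p where "p = complexity s N"
  have pN: "p \<ge> N + 1" unfolding p_def using compl_ge[OF assms(1,2)] .
  have "\<forall>m. \<exists>i j. m*(p+1) \<le> i \<and> i < j \<and> j \<le> m*(p+1) + p \<and> factor s i N = factor s j N"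
    using pigeon[OF assms(1)] unfolding p_def by blast
  then obtain I J where IJ: "\<And>m. m*(p+1) \<le> I m \<and> I m < J m \<and> J m \<le> m*(p+1) + p \<and> factor s (I m) N = factor s (J m) N"
    by metis
  define f where "f q = (if even q then I (q div 2) else J (q div 2))" for q
  have "f q < f (Suc q)" for q
  proof (cases "even q")
    case True
    then show ?thesis using IJ[of "q div 2"] by (simp add: f_def)
  next
    case False
    then obtain m where q: "q = 2*m+1" by (metis oddE)
    have "J m \<le> m*(p+1) + p" using IJ[of m] by simp
    also have "\<dots> < Suc m * (p+1)" by simp
    also have "\<dots> \<le> I (Suc m)" using IJ[of "Suc m"] by simp
    finally show ?thesis using q by (simp add: f_def)
  qed
  hence sm: "strict_mono f" by (simp add: strict_mono_Suc_iff)
  define D where "D = map f [0..<2*k]"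
  have len: "length D = 2*k" by (simp add: D_def)
  have sorted: "sorted_wrt (<) D" unfolding D_def sorted_wrt_map
    using sm by (auto intro: sorted_wrt_mono_rel[OF _ sorted_wrt_upt] simp: strict_mono_def)
  obtain k' where k': "k = Suc k'" using assms(3) by (cases k) auto
  have "last D = f (2*k - 1)" unfolding D_def using assms(3) by (simp add: last_map)
  also have "\<dots> = J k'" unfolding f_def k' by simp
  finally have lastD: "last D \<le> k'*(p+1) + p" using IJ[of k'] by simp
  have "k' \<le> k' * p" using pN by simp
  moreover have "2 * k * p = 2*p + 2*(k'*p)" unfolding k' by simp
  moreover have "k'*(p+1) + p = k' + p + k'*p" by simp
  ultimately have bound: "N + last D \<le> 2 * k * p" using lastD pN by linarith
  have pair: "s (n + I m) = s (n + J m)" if "n < N" for n m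
    using IJ[of m] that unfolding factor_eq_iff by (simp add: add.commute)
  have "corrV s N D = (\<Sum>n<N. (1::int))"
    unfolding corrV_def
  proof (rule sum.cong[OF refl])
    fix n assume "n \<in> {..<N}"
    hence n: "n < N" by simp
    have "(\<Sum>d\<leftarrow>D. s (n + d)) = (\<Sum>q<2*k. s (n + f q))"
      unfolding D_def by (simp add: interv_sum_list_conv_sum_set_nat atLeast0LessThan comp_def)
    moreover have "even (\<Sum>q<2*k. s (n + f q))"
      by (rule even_pairs) (simp add: f_def pair[OF n])
    ultimately show "(-1::int) ^ (\<Sum>d\<leftarrow>D. s (n + d)) = 1" by simp
  qed
  hence V: "\<bar>corrV s N D\<bar> = int N" by simp
  have mem: "\<bar>corrV s N D\<bar> \<in> {\<bar>corrV s M D\<bar> | M D. length D = 2*k \<and> sorted_wrt (<) D \<and> M + last D \<le> 2 * k * complexity s N}"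
    using len sorted bound unfolding p_def by blast
  have "int N \<le> corrC (2 * k) s (2 * k * complexity s N)"
    unfolding corrC_def using Max_ge[OF fin_corr mem] V assms(3) by simp
  then show ?thesis .
qed

end
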